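(* Let $x$ be a positive integer and $v=(v_1,v_2,\dots)$ a back tracing parity vector for $x$. Let $p_n$ be the number of $1$'s among $v_1,\dots,v_n$ divided by $n$. Then $\limsup_{n\to\infty}p_n\le\log_3 2$.
   Context: Let $T(z)=z/2$ for $z$ even and $T(z)=(3z+1)/2$ for $z$ odd. A sequence $(v_1,v_2,\dots)\in\{0,1\}^{\mathbb{N}}$ is a back tracing parity vector for a positive integer $x$ if there are positive integers $x_0=x,x_1,x_2,\dots$ with $T(x_i)=x_{i-1}$ and $x_i\equiv v_i\pmod 2$ for all $i\ge1$. *)

theory Defs
  imports Complex_Main "HOL-Library.Extended_Real"
begin

definition collatzT :: "nat \<Rightarrow> nat" where
  "collatzT z = (if even z then z div 2 else (3 * z + 1) div 2)"

text \<open>v (indexed from 1; v 0 is irrelevant) is a back tracing parity vector for x.\<close>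
definition back_tracing_parity_vector :: "(nat \<Rightarrow> nat) \<Rightarrow> nat \<Rightarrow> bool" where
  "back_tracing_parity_vector v x \<longleftrightarrow>
     (\<forall>i\<ge>1. v i \<in> {0, 1}) \<and>
     (\<exists>xs :: nat \<Rightarrow> nat. xs 0 = x \<and>
        (\<forall>i\<ge>1. xs i > 0 \<and> collatzT (xs i) = xs (i - 1) \<and> xs i mod 2 = v i mod 2))"

end

theory Submission
  imports Defs
begin

lemma step_bound:
  assumes "collatzT y = z" "v \<in> {0,1}" "y mod 2 = v mod 2"
  shows "real y * 3 ^ v \<le> 2 * real z"
proof (cases "even y")
  case True
  then have "v = 0" using assms by auto
  moreover have "z = y div 2" using assms True by (simp add: collatzT_def)
  ultimately show ?thesis using True by auto
next
  case False
  then have "v = 1" using assms by auto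
  moreover have "z = (3*y+1) div 2" using assms False by (simp add: collatzT_def)
  moreover have "even (3*y+1)" using False by simp
  ultimately have "2*z = 3*y+1" "v=1" by auto
  then show ?thesis by (simp; linarith)
qed

theorem mainTheorem9:
  fixes x :: nat and v :: "nat \<Rightarrow> nat"
  assumes "x > 0"
    and "back_tracing_parity_vector v x"
  shows "limsup (\<lambda>n. ereal ((\<Sum>i=1..n. real (v i)) / real n)) \<le> ereal (log 3 2)"
proof -
  obtain xs where v01: "\<forall>i\<ge>1. v i \<in> {0,1}" and x0: "xs 0 = x" and
    H: "\<forall>i\<ge>1. xs i > 0 \<and> collatzT (xs i) = xs (i - 1) \<and> xs i mod 2 = v i mod 2"
    using assms(2) unfolding back_tracing_parity_vector_def by blast
  have bnd: "real (xs n) * 3 ^ (\<Sum>i=1..n. v i) \<le> real x * 2 ^ n" for n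
  proof (induction n)
    case 0 then show ?case using x0 by simp
  next
    case (Suc n)
    have s: "real (xs (Suc n)) * 3 ^ v (Suc n) \<le> 2 * real (xs n)"
      using step_bound[of "xs (Suc n)" "xs n" "v (Suc n)"] H v01 by auto
    have "real (xs (Suc n)) * 3 ^ (\<Sum>i=1..Suc n. v i)
        = (real (xs (Suc n)) * 3 ^ v (Suc n)) * 3 ^ (\<Sum>i=1..n. v i)"
      by (simp add: power_add)
    also have "\<dots> \<le> (2 * real (xs n)) * 3 ^ (\<Sum>i=1..n. v i)"
      using s by (intro mult_right_mono) auto
    also have "\<dots> \<le> 2 * (real x * 2 ^ n)" using Suc.IH by simp
    finally show ?case by simp
  qed
  have kb: "real (\<Sum>i=1..n. v i) \<le> log 3 (real x) + real n * log 3 2" for n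
  proof -
    have pos: "real (xs n) \<ge> 1" using H x0 assms(1)
      by (cases n) (auto simp: Suc_le_eq)
    have "(3::real) ^ (\<Sum>i=1..n. v i) \<le> real (xs n) * 3 ^ (\<Sum>i=1..n. v i)"
      using pos by simp
    also have "\<dots> \<le> real x * 2 ^ n" by (rule bnd)
    finally have a: "(3::real) ^ (\<Sum>i=1..n. v i) \<le> real x * 2 ^ n" .
    have "log 3 ((3::real) ^ (\<Sum>i=1..n. v i)) \<le> log 3 (real x * 2 ^ n)"
      using a assms(1) by (subst log_le_cancel_iff) auto
    then show ?thesis using assms(1) by (simp add: log_mult log_nat_power)
  qed
  have ev: "eventually (\<lambda>n. ereal ((\<Sum>i=1..n. real (v i)) / real n)
      \<le> ereal (log 3 2 + log 3 (real x) / real n)) sequentially"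
    using eventually_ge_at_top[of 1]
  proof eventually_elim
    case (elim n)
    have "(\<Sum>i=1..n. real (v i)) = real (\<Sum>i=1..n. v i)" by simp
    then have "(\<Sum>i=1..n. real (v i)) / real n \<le> (log 3 (real x) + real n * log 3 2) / real n"
      using kb[of n] elim by (simp add: divide_right_mono)
    also have "\<dots> = log 3 2 + log 3 (real x) / real n" using elim by (simp add: field_simps)
    finally show ?case by simp
  qed
  have lim: "(\<lambda>n. ereal (log 3 2 + log 3 (real x) / real n)) \<longlonglongrightarrow> ereal (log 3 2)"
    by (intro tendsto_intros lim_const_over_n[THEN tendsto_add[OF tendsto_const], simplified]) 
  have "limsup (\<lambda>n. ereal ((\<Sum>i=1..n. real (v i)) / real n))
      \<le> limsup (\<lambda>n. ereal (log 3 2 + log 3 (real x) / real n))"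
    by (rule Limsup_mono[OF ev])
  also have "\<dots> = ereal (log 3 2)" by (rule lim_imp_Limsup[OF _ lim]) simp
  finally show ?thesis .
qed

end
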